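(* Let $\omega$ be a character (non-zero complex homomorphism, not necessarily continuous) of $C(X)'_{00}$, and let $x\in X$ be the unique point such that $\omega$ restricted to $C(X)$ is evaluation at $x$. Then there exists a sequence $(c_k)_{k\in\mathbb{Z}}$ of complex numbers with $c_0=1$ such that $\omega(f\delta^k)=c_kf(x)$ for all $k\in\mathbb{Z}$ and all $f\in C(X)$ with $\mathrm{supp}(f)\subset\mathrm{Fix}_k(\sigma)$.
   Context: Let $X$ be a non-empty compact Hausdorff space and $\sigma:X\to X$ a homeomorphism; $\mathrm{Fix}_k(\sigma)=\{x:\sigma^kx=x\}$, $\mathrm{supp}(f)$ is the closure of $\{f\ne0\}$. $C(X)$ is the algebra of continuous complex functions. $c_{00}(\Sigma)$ is the unital algebra of finite formal sums $\sum_kf_k\delta^k$ ($f_k\in C(X)$) with multiplication determined by $f\delta^k\cdot g\delta^l=f\,(g\circ\sigma^{-k})\,\delta^{k+l}$ (a subalgebra of the twisted convolution algebra $\ell^1(\mathbb{Z},C(X))$ for the action $f\mapsto f\circ\sigma^{-1}$); $C(X)$ is embedded as $\{f\delta^0\}$. $C(X)'_{00}$ is the commutant of $C(X)$ in $c_{00}(\Sigma)$; it equals $\{\sum_kf_k\delta^k:\mathrm{supp}(f_k)\subset\mathrm{Fix}_k(\sigma)\ \forall k\}$ and is commutative. *)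

theory Defs
  imports "HOL-Analysis.Analysis" "HOL-Library.Function_Algebras"
begin

definition zpow :: "('a \<Rightarrow> 'a) \<Rightarrow> int \<Rightarrow> 'a \<Rightarrow> 'a" where
  "zpow \<sigma> k = (if 0 \<le> k then \<sigma> ^^ nat k else (inv \<sigma>) ^^ nat (- k))"

text \<open>Elements of c00(Sigma): finitely supported families (f_k)_{k in Z} of continuous
  functions X -> C, representing the formal sum of f_k delta^k.\<close>
definition c00 :: "(int \<Rightarrow> 'a::topological_space \<Rightarrow> complex) set" where
  "c00 = {F. finite {k. F k \<noteq> 0} \<and> (\<forall>k. continuous_on UNIV (F k))}"

text \<open>Twisted convolution: f delta^k * g delta^l = f (g o sigma^(-k)) delta^(k+l).\<close>
definition cmult :: "('a \<Rightarrow> 'a) \<Rightarrow> (int \<Rightarrow> 'a \<Rightarrow> complex) \<Rightarrow> (int \<Rightarrow> 'a \<Rightarrow> complex)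
    \<Rightarrow> (int \<Rightarrow> 'a \<Rightarrow> complex)" where
  "cmult \<sigma> F G = (\<lambda>n y. \<Sum>k\<in>{k. F k \<noteq> 0}. F k y * G (n - k) (zpow \<sigma> (- k) y))"

definition mdelta :: "('a \<Rightarrow> complex) \<Rightarrow> int \<Rightarrow> (int \<Rightarrow> 'a \<Rightarrow> complex)" where
  "mdelta f k = (\<lambda>j. if j = k then f else 0)"

definition commutant00 :: "('a::topological_space \<Rightarrow> 'a) \<Rightarrow> (int \<Rightarrow> 'a \<Rightarrow> complex) set" where
  "commutant00 \<sigma> = {F \<in> c00. \<forall>f::'a \<Rightarrow> complex. continuous_on UNIV f \<longrightarrow>
       cmult \<sigma> (mdelta f 0) F = cmult \<sigma> F (mdelta f 0)}"

definition character00 :: "('a::topological_space \<Rightarrow> 'a) \<Rightarrow> ((int \<Rightarrow> 'a \<Rightarrow> complex) \<Rightarrow> complex) \<Rightarrow> bool" where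
  "character00 \<sigma> \<omega> \<longleftrightarrow>
     (\<exists>F\<in>commutant00 \<sigma>. \<omega> F \<noteq> 0) \<and>
     (\<forall>F\<in>commutant00 \<sigma>. \<forall>G\<in>commutant00 \<sigma>. \<omega> (F + G) = \<omega> F + \<omega> G) \<and>
     (\<forall>F\<in>commutant00 \<sigma>. \<forall>c. \<omega> (\<lambda>k y. c * F k y) = c * \<omega> F) \<and>
     (\<forall>F\<in>commutant00 \<sigma>. \<forall>G\<in>commutant00 \<sigma>. \<omega> (cmult \<sigma> F G) = \<omega> F * \<omega> G)"

end

theory Submission
  imports Defs
begin

lemma funpow_inv_aux:
  fixes f g :: "'a \<Rightarrow> 'a"
  assumes "\<forall>z. g (f z) = z" shows "(g^^n) ((f^^n) y) = y"
proof (induction n arbitrary: y)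
  case (Suc n)
  have e1: "(f^^Suc n) y = f ((f^^n) y)" by simp
  have e2: "(g^^Suc n) z = (g^^n) (g z)" for z by (simp only: funpow_Suc_right comp_apply)
  have "(g^^Suc n) ((f^^Suc n) y) = (g^^n) (g (f ((f^^n) y)))"
    by (simp only: e1 e2)
  also have "\<dots> = y" using assms Suc by simp
  finally show ?case .
qed simp

lemma zpow_zero[simp]: "zpow \<sigma> 0 = id"
  by (simp add: zpow_def)

lemma zpow_neg_fix:
  assumes "bij \<sigma>" "zpow \<sigma> k y = y"
  shows "zpow \<sigma> (- k) y = y"
proof -
  have a: "\<forall>z. inv \<sigma> (\<sigma> z) = z" using assms(1) by (simp add: bij_def inv_f_f)
  have b: "\<forall>z. \<sigma> (inv \<sigma> z) = z" using assms(1) by (simp add: bij_def surj_f_inv_f)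
  show ?thesis
  proof (cases "0 \<le> k")
    case True
    then have "(\<sigma>^^nat k) y = y" using assms(2) by (simp add: zpow_def)
    then have "(inv \<sigma> ^^ nat k) y = y" using funpow_inv_aux[of "inv \<sigma>" \<sigma>, OF a, of "nat k" y] by simp
    then show ?thesis using True by (cases "k = 0") (auto simp: zpow_def)
  next
    case False
    then have "(inv \<sigma>^^nat (-k)) y = y" using assms(2) by (simp add: zpow_def)
    then have "(\<sigma> ^^ nat (-k)) y = y" using funpow_inv_aux[of \<sigma> "inv \<sigma>", OF b, of "nat (-k)" y] by simp
    then show ?thesis using False by (auto simp: zpow_def)
  qed
qed

lemma cmult_mdelta:
  "cmult \<sigma> (mdelta f a) (mdelta g b) = mdelta (\<lambda>y. f y * g (zpow \<sigma> (-a) y)) (a+b)"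
proof (cases "f = 0")
  case True
  have S: "{k. mdelta f a k \<noteq> 0} = {}" using True by (simp add: mdelta_def)
  show ?thesis
  proof (intro ext)
    fix n y
    have "cmult \<sigma> (mdelta f a) (mdelta g b) n y = 0"
      unfolding cmult_def S by simp
    then show "cmult \<sigma> (mdelta f a) (mdelta g b) n y = mdelta (\<lambda>y. f y * g (zpow \<sigma> (- a) y)) (a + b) n y"
      by (simp add: mdelta_def True)
  qed
next
  case False
  then have S: "{k. mdelta f a k \<noteq> 0} = {a}" by (auto simp: mdelta_def)
  show ?thesis
  proof (intro ext)
    fix n y
    have "cmult \<sigma> (mdelta f a) (mdelta g b) n y = (\<Sum>k\<in>{a}. mdelta f a k y * mdelta g b (n - k) (zpow \<sigma> (- k) y))"
      unfolding cmult_def S ..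
    also have "\<dots> = f y * mdelta g b (n - a) (zpow \<sigma> (- a) y)"
      by (simp add: mdelta_def)
    finally show "cmult \<sigma> (mdelta f a) (mdelta g b) n y = mdelta (\<lambda>y. f y * g (zpow \<sigma> (- a) y)) (a + b) n y"
      by (cases "n = a + b") (simp_all add: mdelta_def)
  qed
qed

lemma mdelta_comm:
  assumes "bij \<sigma>" "continuous_on UNIV h" "closure {y. h y \<noteq> 0} \<subseteq> {y. zpow \<sigma> k y = y}"
  shows "mdelta h k \<in> commutant00 \<sigma>"
proof -
  have "finite {j. mdelta h k j \<noteq> 0}"
    by (rule finite_subset[of _ "{k}"]) (auto simp: mdelta_def)
  moreover have "\<forall>j. continuous_on UNIV (mdelta h k j)"
    using assms(2) by (auto simp: mdelta_def)
  ultimately have c: "mdelta h k \<in> c00" by (simp add: c00_def)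
  have eq: "h y * f (zpow \<sigma> (-k) y) = f y * h y" for f :: "'a \<Rightarrow> complex" and y
  proof (cases "h y = 0")
    case False
    then have "y \<in> {y. h y \<noteq> 0}" by simp
    then have "y \<in> closure {y. h y \<noteq> 0}" by (rule subsetD[OF closure_subset])
    then have "y \<in> {y. zpow \<sigma> k y = y}" by (rule subsetD[OF assms(3)])
    then have "zpow \<sigma> k y = y" by simp
    then have "zpow \<sigma> (-k) y = y" by (rule zpow_neg_fix[OF assms(1)])
    then show ?thesis by simp
  qed simp
  have "cmult \<sigma> (mdelta f 0) (mdelta h k) = cmult \<sigma> (mdelta h k) (mdelta f 0)" for f :: "'a \<Rightarrow> complex"
  proof -
    have "cmult \<sigma> (mdelta f 0) (mdelta h k) = mdelta (\<lambda>y. f y * h y) k"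
      unfolding cmult_mdelta by simp
    also have "\<dots> = mdelta (\<lambda>y. h y * f (zpow \<sigma> (-k) y)) k"
      by (simp only: eq)
    also have "\<dots> = cmult \<sigma> (mdelta h k) (mdelta f 0)"
      unfolding cmult_mdelta by simp
    finally show ?thesis .
  qed
  then show ?thesis using c unfolding commutant00_def by blast
qed

lemma mdelta_add: "mdelta (\<lambda>y. f y + g y) k = mdelta f k + mdelta g k"
  by (auto simp: mdelta_def fun_eq_iff)

lemma mdelta_scale: "mdelta (\<lambda>y. c * f y) k = (\<lambda>j y. c * mdelta f k j y)"
  by (auto simp: mdelta_def fun_eq_iff)

lemma sqrt_factor:
  fixes f :: "'a::t2_space \<Rightarrow> complex"
  assumes "continuous_on UNIV f"
  defines "g \<equiv> \<lambda>y. complex_of_real (sqrt (cmod (f y)))"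
  defines "h \<equiv> \<lambda>y. if f y = 0 then 0 else f y / g y"
  shows "continuous_on UNIV g" "continuous_on UNIV h" "\<And>y. g y * h y = f y"
    "{y. h y \<noteq> 0} = {y. f y \<noteq> 0}"
proof -
  show cg: "continuous_on UNIV g" unfolding g_def
    by (intro continuous_intros assms)
  have gnz: "f y \<noteq> 0 \<Longrightarrow> g y \<noteq> 0" for y by (simp add: g_def)
  show "\<And>y. g y * h y = f y" using gnz by (simp add: h_def g_def)
  show "{y. h y \<noteq> 0} = {y. f y \<noteq> 0}" using gnz by (auto simp: h_def)
  have "isCont h y0" for y0
  proof (cases "f y0 = 0")
    case True
    have nh: "norm (h y) \<le> sqrt (cmod (f y))" for y
    proof (cases "f y = 0")
      case False
      have "norm (h y) = cmod (f y) / sqrt (cmod (f y))"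
        using False by (simp add: h_def g_def norm_divide)
      also have "\<dots> = sqrt (cmod (f y))"
        using False by (metis real_div_sqrt norm_ge_zero)
      finally show ?thesis by simp
    qed (simp add: h_def)
    have "isCont (\<lambda>y. sqrt (cmod (f y))) y0"
      using assms by (intro continuous_intros) (auto simp: continuous_on_eq_continuous_at)
    then have "((\<lambda>y. sqrt (cmod (f y))) \<longlongrightarrow> 0) (at y0)"
      using True by (simp add: isCont_def)
    then have "(h \<longlongrightarrow> 0) (at y0)"
      by (rule Lim_null_comparison[rotated]) (simp add: nh)
    then show ?thesis using True by (simp add: isCont_def h_def)
  next
    case False
    have op: "open {y. f y \<noteq> 0}"
      using assms by (intro open_Collect_neq) (auto intro: continuous_intros)
    have "continuous_on {y. f y \<noteq> 0} (\<lambda>y. f y / g y)"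
      using assms cg gnz by (intro continuous_intros) (auto elim: continuous_on_subset)
    then have "continuous_on {y. f y \<noteq> 0} h"
      by (rule continuous_on_cong[THEN iffD1, rotated 2]) (auto simp: h_def)
    then show ?thesis using op False continuous_on_eq_continuous_at by blast
  qed
  then show "continuous_on UNIV h" by (simp add: continuous_on_eq_continuous_at)
qed

lemma sqrt_factor_ex:
  fixes f :: "'a::t2_space \<Rightarrow> complex"
  assumes "continuous_on UNIV f"
  shows "\<exists>g h. continuous_on UNIV g \<and> continuous_on UNIV h \<and> (\<forall>y. g y * h y = f y) \<and>
    {y. h y \<noteq> 0} = {y. f y \<noteq> 0} \<and> (\<forall>y. f y = 0 \<longrightarrow> g y = 0)"
  using sqrt_factor[OF assms] by (intro exI[of _ "\<lambda>y. complex_of_real (sqrt (cmod (f y)))"] exI) auto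

theorem lemma3p1:
  fixes \<sigma> :: "'a::t2_space \<Rightarrow> 'a" and \<omega> :: "(int \<Rightarrow> 'a \<Rightarrow> complex) \<Rightarrow> complex" and x :: 'a
  assumes "compact (UNIV :: 'a set)"
    and "\<exists>\<tau>. homeomorphism UNIV UNIV \<sigma> \<tau>"
    and "character00 \<sigma> \<omega>"
    and "\<forall>f::'a \<Rightarrow> complex. continuous_on UNIV f \<longrightarrow> \<omega> (mdelta f 0) = f x"
  shows "\<exists>c :: int \<Rightarrow> complex. c 0 = 1 \<and>
    (\<forall>k. \<forall>f::'a \<Rightarrow> complex. continuous_on UNIV f \<and>
        closure {y. f y \<noteq> 0} \<subseteq> {y. zpow \<sigma> k y = y} \<longrightarrow> \<omega> (mdelta f k) = c k * f x)"
proof -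
  obtain \<tau> where hom: "homeomorphism UNIV UNIV \<sigma> \<tau>" using assms(2) by blast
  have bij: "bij \<sigma>" using hom unfolding homeomorphism_def
    by (metis UNIV_I bij_betw_def bij_betw_byWitness image_subsetI)
  note ch = assms(3)[unfolded character00_def]
  have add: "\<omega> (F + G) = \<omega> F + \<omega> G" if "F \<in> commutant00 \<sigma>" "G \<in> commutant00 \<sigma>" for F G
    using ch that by blast
  have scal: "\<omega> (\<lambda>k y. c * F k y) = c * \<omega> F" if "F \<in> commutant00 \<sigma>" for F c
    using ch that by blast
  have mul: "\<omega> (cmult \<sigma> F G) = \<omega> F * \<omega> G" if "F \<in> commutant00 \<sigma>" "G \<in> commutant00 \<sigma>" for F G
    using ch that by blast
  define P where "P k f \<longleftrightarrow> continuous_on UNIV f \<and> closure {y. f y \<noteq> 0} \<subseteq> {y. zpow \<sigma> k y = y}"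
    for k and f :: "'a \<Rightarrow> complex"
  have Pscale: "P k (\<lambda>y. c * f y)" if "P k f" for k f c
  proof -
    have "closure {y. c * f y \<noteq> 0} \<subseteq> closure {y. f y \<noteq> 0}" by (rule closure_mono) auto
    then show ?thesis using that unfolding P_def by (auto intro: continuous_intros)
  qed
  have Pcomm: "mdelta f k \<in> commutant00 \<sigma>" if "P k f" for k f
    using that bij unfolding P_def by (intro mdelta_comm) auto
  have zero: "\<omega> (mdelta f k) = 0" if "P k f" "f x = 0" for f k
  proof -
    have cf: "continuous_on UNIV f" using that P_def by simp
    obtain g h where fac: "continuous_on UNIV g" "continuous_on UNIV h" "\<And>y. g y * h y = f y"
      "{y. h y \<noteq> 0} = {y. f y \<noteq> 0}" "\<And>y. f y = 0 \<Longrightarrow> g y = 0"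
      using sqrt_factor_ex[OF cf] by blast
    have gc: "mdelta g 0 \<in> commutant00 \<sigma>" using fac(1) bij by (intro mdelta_comm) (auto simp: zpow_def)
    have hc: "mdelta h k \<in> commutant00 \<sigma>" using fac(2,4) bij that(1)
      by (intro mdelta_comm) (auto simp: P_def)
    have "cmult \<sigma> (mdelta g 0) (mdelta h k) = mdelta f k"
      by (simp add: cmult_mdelta fac(3))
    then have "\<omega> (mdelta f k) = \<omega> (mdelta g 0) * \<omega> (mdelta h k)" using mul[OF gc hc] by simp
    also have "\<omega> (mdelta g 0) = g x" using assms(4) fac(1) by blast
    finally show ?thesis using that(2) fac(5) by simp
  qed
  define c where "c k = (if \<exists>f. P k f \<and> f x \<noteq> 0
     then (let f0 = SOME f. P k f \<and> f x \<noteq> 0 in \<omega> (mdelta f0 k) / f0 x) else 0)" for k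
  have main: "\<omega> (mdelta f k) = c k * f x" if "P k f" for k f
  proof (cases "\<exists>f. P k f \<and> f x \<noteq> 0")
    case False
    then have "f x = 0" using that by blast
    then show ?thesis using zero that by simp
  next
    case True
    define f0 where "f0 = (SOME f. P k f \<and> f x \<noteq> 0)"
    have f0: "P k f0" "f0 x \<noteq> 0" using someI_ex[OF True] f0_def by auto
    have ck: "c k = \<omega> (mdelta f0 k) / f0 x" using True by (simp add: c_def f0_def Let_def)
    define d where "d = (\<lambda>y. f0 x * f y + (- f x) * f0 y)"
    have Pd: "P k d"
    proof -
      have "continuous_on UNIV d" using that f0 unfolding d_def P_def
        by (intro continuous_intros) auto
      moreover have "{y. d y \<noteq> 0} \<subseteq> {y. f y \<noteq> 0} \<union> {y. f0 y \<noteq> 0}" by (auto simp: d_def)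
      then have "closure {y. d y \<noteq> 0} \<subseteq> closure {y. f y \<noteq> 0} \<union> closure {y. f0 y \<noteq> 0}"
        by (metis closure_Un closure_mono)
      ultimately show ?thesis using that f0 unfolding P_def by blast
    qed
    have d0: "d x = 0" by (simp add: d_def)
    have m1: "mdelta f k \<in> commutant00 \<sigma>" using that bij by (intro mdelta_comm) (auto simp: P_def)
    have m2: "mdelta f0 k \<in> commutant00 \<sigma>" using f0 bij by (intro mdelta_comm) (auto simp: P_def)
    define A where "A = (\<lambda>j y. f0 x * mdelta f k j y)"
    define B where "B = (\<lambda>j y. (- f x) * mdelta f0 k j y)"
    have dAB: "mdelta d k = A + B"
      unfolding d_def mdelta_add mdelta_scale A_def B_def ..
    have Ac: "A \<in> commutant00 \<sigma>"
      unfolding A_def mdelta_scale[symmetric] by (rule Pcomm[OF Pscale[OF that]])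
    have Bc: "B \<in> commutant00 \<sigma>"
      unfolding B_def mdelta_scale[symmetric] by (rule Pcomm[OF Pscale[OF f0(1)]])
    have sA: "\<omega> A = f0 x * \<omega> (mdelta f k)" unfolding A_def by (rule scal[OF m1])
    have sB: "\<omega> B = (- f x) * \<omega> (mdelta f0 k)" unfolding B_def by (rule scal[OF m2])
    have "\<omega> (mdelta d k) = f0 x * \<omega> (mdelta f k) + (- f x) * \<omega> (mdelta f0 k)"
      unfolding dAB add[OF Ac Bc] sA sB ..
    with zero[OF Pd d0] have "f0 x * \<omega> (mdelta f k) = f x * \<omega> (mdelta f0 k)" by simp
    then have "\<omega> (mdelta f k) = f x * \<omega> (mdelta f0 k) / f0 x"
      using f0(2) by (simp add: eq_divide_eq mult.commute)
    then show ?thesis unfolding ck by simp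
  qed
  have c0: "c 0 = 1"
  proof -
    have P1: "P 0 (\<lambda>y. 1)" by (simp add: P_def)
    have "\<omega> (mdelta (\<lambda>y. 1) 0) = 1" using assms(4) by simp
    with main[OF P1] show ?thesis by simp
  qed
  show ?thesis using c0 main unfolding P_def by blast
qed

end
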